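(* Let $\Omega$ be a region of $\mathcal{C}^*_{n,A}$ and $1\le k\le m$. For $\bm x\in\Omega$ with associated permutation $\pi$, let $M_k(\bm x)$ be the $n\times n$ matrix with entries $\operatorname{sgn}(x_{\pi(i)}-x_{\pi(j)}-a_k)$, $i,j\in[n]$. Then $M_k(\bm x)$ does not depend on the choice of $\bm x\in\Omega$ (even though $\pi$ may).
   Context: Let $A=\{a_1,\dots,a_m\}$ with $a_1>\dots>a_m>0$, and $\mathcal{C}^*_{n,A}$ the arrangement in $\mathbb{R}^n$ of hyperplanes $x_i-x_j=a_k$ ($i\ne j$, $1\le k\le m$); a region is a connected component of the complement of the union of its hyperplanes. For $\bm x\in\mathbb{R}^n$, the associated permutation of $\bm x$ is the unique $\pi\in\mathfrak{S}_n$ with $x_{\pi(1)}\ge x_{\pi(2)}\ge\dots\ge x_{\pi(n)}$ and such that $\pi^{-1}(i)<\pi^{-1}(j)$ whenever $i<j$ and $x_i=x_j$. Here $\operatorname{sgn}$ takes values in $\{-,0,+\}$. *)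

theory Defs
  imports "HOL-Analysis.Analysis"
begin

text \<open>Points of R^n are vectors real^'n, where the finite, linearly ordered index
type 'n plays the role of [n] = {1,...,n} with its usual order.
The parameter set A = {a_1,...,a_m} is given by a :: nat => real on {1..m}.\<close>

definition arr_union :: "(nat \<Rightarrow> real) \<Rightarrow> nat \<Rightarrow> (real ^ 'n) set" where
  "arr_union a m = {x. \<exists>i j k. i \<noteq> j \<and> k \<in> {1..m} \<and> x $ i - x $ j = a k}"

definition regions :: "(nat \<Rightarrow> real) \<Rightarrow> nat \<Rightarrow> (real ^ 'n) set set" where
  "regions a m = components (UNIV - arr_union a m)"

definition is_assoc_perm :: "real ^ ('n::{finite,linorder}) \<Rightarrow> ('n \<Rightarrow> 'n) \<Rightarrow> bool" where
  "is_assoc_perm x \<pi> \<longleftrightarrow> \<pi> permutes UNIV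
     \<and> (\<forall>p q. p \<le> q \<longrightarrow> x $ (\<pi> q) \<le> x $ (\<pi> p))
     \<and> (\<forall>i j. i < j \<and> x $ i = x $ j \<longrightarrow> inv \<pi> i < inv \<pi> j)"

definition assoc_perm :: "real ^ ('n::{finite,linorder}) \<Rightarrow> ('n \<Rightarrow> 'n)" where
  "assoc_perm x = (THE \<pi>. is_assoc_perm x \<pi>)"

definition Mk :: "(nat \<Rightarrow> real) \<Rightarrow> nat \<Rightarrow> real ^ ('n::{finite,linorder}) \<Rightarrow> real ^ ('n::{finite,linorder}) ^ ('n::{finite,linorder})" where
  "Mk a k x = (let \<pi> = assoc_perm x in
      (\<chi> i j. sgn (x $ (\<pi> i) - x $ (\<pi> j) - a k)))"

end

theory Submission
  imports Defs
begin

lemma rank_lt: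
  fixes f :: "'n::finite \<Rightarrow> 'b::linorder"
  assumes "f i < f j"
  shows "card {l. f l < f i} < card {l. f l < f j}"
proof (rule psubset_card_mono)
  show "finite {l. f l < f j}" by simp
  show "{l. f l < f i} \<subset> {l. f l < f j}"
    using assms by (auto intro: less_trans)
qed

lemma rank_lt_iff:
  fixes f :: "'n::finite \<Rightarrow> 'b::linorder"
  assumes "inj f"
  shows "card {l. f l < f i} < card {l. f l < f j} \<longleftrightarrow> f i < f j"
proof
  assume h: "card {l. f l < f i} < card {l. f l < f j}"
  show "f i < f j"
  proof (rule ccontr)
    assume "\<not> f i < f j"
    then have "f j < f i \<or> f j = f i" by auto
    then show False using rank_lt[of f j i] h by auto
  qed
qed (rule rank_lt)

lemma rank_inj:
  fixes f :: "'n::finite \<Rightarrow> 'b::linorder"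
  assumes "inj f"
  shows "inj (\<lambda>i. card {l. f l < f i})"
proof (rule injI)
  fix i j assume h: "card {l. f l < f i} = card {l. f l < f j}"
  show "i = j"
  proof (rule ccontr)
    assume "i \<noteq> j"
    then have "f i \<noteq> f j" using assms by (auto dest: injD)
    then have "f i < f j \<or> f j < f i" by auto
    then show False using rank_lt[of f i j] rank_lt[of f j i] h by auto
  qed
qed

lemma rank_range:
  fixes f :: "'n::finite \<Rightarrow> 'b::linorder"
  assumes "inj f"
  shows "range (\<lambda>i. card {l. f l < f i}) = {..<CARD('n)}"
proof (rule card_subset_eq)
  show "range (\<lambda>i. card {l. f l < f i}) \<subseteq> {..<CARD('n)}"
  proof
    fix r assume "r \<in> range (\<lambda>i. card {l. f l < f i})"
    then obtain i where r: "r = card {l. f l < f i}" by auto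
    have "{l. f l < f i} \<subset> UNIV" by auto
    then have "card {l. f l < f i} < card (UNIV::'n set)"
      by (intro psubset_card_mono) auto
    then show "r \<in> {..<CARD('n)}" using r by auto
  qed
  show "card (range (\<lambda>i. card {l. f l < f i})) = card {..<CARD('n)}"
    using card_image[OF rank_inj[OF assms]] by simp
qed simp

lemma rank_perm:
  fixes f :: "'n::{finite,linorder} \<Rightarrow> 'b::linorder" and \<sigma> :: "'n \<Rightarrow> 'n"
  assumes "\<sigma> permutes UNIV" and mono: "\<forall>p q. p < q \<longrightarrow> f (\<sigma> p) < f (\<sigma> q)"
  shows "card {j. f j < f (\<sigma> p)} = card {q. q < p}"
proof -
  have inj: "inj \<sigma>" using assms(1) permutes_inj by blast
  have surj: "surj \<sigma>" using assms(1) permutes_surj by blast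
  have "{j. f j < f (\<sigma> p)} = \<sigma> ` {q. q < p}"
  proof (rule set_eqI, rule iffI)
    fix j assume j: "j \<in> {j. f j < f (\<sigma> p)}"
    obtain q where q: "j = \<sigma> q" using surj by (metis surj_def)
    have "q < p"
    proof (rule ccontr)
      assume "\<not> q < p"
      then have "p = q \<or> p < q" by auto
      then show False using mono j q by (auto dest: order.asym)
    qed
    then show "j \<in> \<sigma> ` {q. q < p}" using q by auto
  qed (use mono in auto)
  then show ?thesis using card_image[OF inj_on_subset[OF inj]] by simp
qed

lemma iso_unique:
  fixes f :: "'n::{finite,linorder} \<Rightarrow> 'b::linorder" and \<sigma> \<tau> :: "'n \<Rightarrow> 'n"
  assumes "inj f" "\<sigma> permutes UNIV" "\<forall>p q. p < q \<longrightarrow> f (\<sigma> p) < f (\<sigma> q)"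
    "\<tau> permutes UNIV" "\<forall>p q. p < q \<longrightarrow> f (\<tau> p) < f (\<tau> q)"
  shows "\<sigma> = \<tau>"
proof
  fix p
  have "card {j. f j < f (\<sigma> p)} = card {j. f j < f (\<tau> p)}"
    using rank_perm[OF assms(2,3)] rank_perm[OF assms(4,5)] by simp
  then show "\<sigma> p = \<tau> p" using rank_inj[OF assms(1)] by (auto dest: injD)
qed

lemma iso_exists:
  fixes f :: "'n::{finite,linorder} \<Rightarrow> 'b::linorder"
  assumes "inj f"
  shows "\<exists>\<sigma>. \<sigma> permutes UNIV \<and> (\<forall>p q. p < q \<longrightarrow> f (\<sigma> p) < f (\<sigma> q))"
proof -
  define r where "r = (\<lambda>i. card {l. f l < f i})"
  define s where "s = (\<lambda>i::'n. card {l. id l < id i})"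
  have ri: "inj r" unfolding r_def by (rule rank_inj[OF assms])
  have rr: "range r = {..<CARD('n)}" unfolding r_def by (rule rank_range[OF assms])
  have si: "inj s" unfolding s_def by (rule rank_inj) simp
  have sr: "range s = {..<CARD('n)}" unfolding s_def by (rule rank_range) simp
  define \<sigma> where "\<sigma> = inv r \<circ> s"
  have rs: "r (\<sigma> p) = s p" for p
    unfolding \<sigma>_def proof -
    have "s p \<in> range r" using rr sr by auto
    then show "r ((inv r \<circ> s) p) = s p" by (simp add: f_inv_into_f)
  qed
  have "inj \<sigma>"
  proof (rule injI)
    fix p q assume "\<sigma> p = \<sigma> q"
    then have "s p = s q" using rs by metis
    then show "p = q" using si by (auto dest: injD)
  qed
  then have "bij \<sigma>" by (metis bij_def finite_UNIV_inj_surj finite_class.finite_UNIV)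
  then have perm: "\<sigma> permutes UNIV" by (auto intro: bij_imp_permutes)
  have "f (\<sigma> p) < f (\<sigma> q)" if "p < q" for p q
  proof -
    have "s p < s q" unfolding s_def using rank_lt[of id p q] that by simp
    then have "r (\<sigma> p) < r (\<sigma> q)" using rs by simp
    then show ?thesis unfolding r_def using rank_lt_iff[OF assms] by blast
  qed
  then show ?thesis using perm by blast
qed

datatype key = Key real real

instantiation key :: linorder
begin
fun less_eq_key :: "key \<Rightarrow> key \<Rightarrow> bool" where
  "less_eq_key (Key a b) (Key c d) \<longleftrightarrow> a < c \<or> a = c \<and> b \<le> d"
fun less_key :: "key \<Rightarrow> key \<Rightarrow> bool" where
  "less_key (Key a b) (Key c d) \<longleftrightarrow> a < c \<or> a = c \<and> b < d"
instance
proof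
  fix x y z :: key
  show "(x < y) = (x \<le> y \<and> \<not> y \<le> x)" by (cases x; cases y) auto
  show "x \<le> x" by (cases x) auto
  show "x \<le> y \<Longrightarrow> y \<le> z \<Longrightarrow> x \<le> z" by (cases x; cases y; cases z) auto
  show "x \<le> y \<Longrightarrow> y \<le> x \<Longrightarrow> x = y" by (cases x; cases y) auto
  show "x \<le> y \<or> y \<le> x" by (cases x; cases y) auto
qed
end

definition idx :: "'n::{finite,linorder} \<Rightarrow> real" where
  "idx i = real (card {j. j < i})"

lemma idx_less: "idx i < idx j \<longleftrightarrow> i < j"
  using rank_lt_iff[of id i j] by (simp add: idx_def)

lemma idx_eq: "idx i = idx j \<longleftrightarrow> i = j"
  using idx_less[of i j] idx_less[of j i] by (metis less_irrefl neq_iff)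

lemma assoc_char:
  fixes x :: "real ^ ('n::{finite,linorder})"
  shows "is_assoc_perm x \<pi> \<longleftrightarrow> \<pi> permutes UNIV \<and>
     (\<forall>p q. p < q \<longrightarrow> Key (- x $ \<pi> p) (idx (\<pi> p)) < Key (- x $ \<pi> q) (idx (\<pi> q)))"
proof
  assume h: "is_assoc_perm x \<pi>"
  then have perm: "\<pi> permutes UNIV" and anti: "\<And>p q. p \<le> q \<Longrightarrow> x $ (\<pi> q) \<le> x $ (\<pi> p)"
    and tie: "\<And>i j. i < j \<Longrightarrow> x $ i = x $ j \<Longrightarrow> inv \<pi> i < inv \<pi> j"
    unfolding is_assoc_perm_def by auto
  have "Key (- x $ \<pi> p) (idx (\<pi> p)) < Key (- x $ \<pi> q) (idx (\<pi> q))" if pq: "p < q" for p q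
  proof (cases "x $ \<pi> p = x $ \<pi> q")
    case True
    have ne: "\<pi> p \<noteq> \<pi> q" using perm pq by (metis permutes_inj injD less_irrefl)
    have "\<pi> p < \<pi> q"
    proof (rule ccontr)
      assume "\<not> \<pi> p < \<pi> q"
      then have "\<pi> q < \<pi> p" using ne by auto
      then have "inv \<pi> (\<pi> q) < inv \<pi> (\<pi> p)" using tie True by auto
      then show False using perm pq by (simp add: permutes_inverses(2))
    qed
    then show ?thesis using True by (simp add: idx_less)
  next
    case False
    then show ?thesis using anti[of p q] pq by (auto simp: less_imp_le)
  qed
  then show "\<pi> permutes UNIV \<and> (\<forall>p q. p < q \<longrightarrow> Key (- x $ \<pi> p) (idx (\<pi> p)) < Key (- x $ \<pi> q) (idx (\<pi> q)))"
    using perm by auto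
next
  assume h: "\<pi> permutes UNIV \<and> (\<forall>p q. p < q \<longrightarrow> Key (- x $ \<pi> p) (idx (\<pi> p)) < Key (- x $ \<pi> q) (idx (\<pi> q)))"
  then have perm: "\<pi> permutes UNIV"
    and mono: "\<And>p q. p < q \<Longrightarrow> Key (- x $ \<pi> p) (idx (\<pi> p)) < Key (- x $ \<pi> q) (idx (\<pi> q))" by auto
  have anti: "x $ (\<pi> q) \<le> x $ (\<pi> p)" if "p \<le> q" for p q
    using mono[of p q] that by (cases "p = q") (auto simp: le_less)
  have tie: "inv \<pi> i < inv \<pi> j" if "i < j" "x $ i = x $ j" for i j
  proof (rule ccontr)
    assume "\<not> inv \<pi> i < inv \<pi> j"
    moreover have "inv \<pi> i \<noteq> inv \<pi> j" using that perm
      by (metis permutes_inverses(1) less_irrefl)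
    ultimately have "inv \<pi> j < inv \<pi> i" by auto
    from mono[OF this] have "Key (- x $ j) (idx j) < Key (- x $ i) (idx i)" using perm
      by (simp add: permutes_inverses(1))
    then show False using that by (auto simp: idx_less)
  qed
  show "is_assoc_perm x \<pi>" unfolding is_assoc_perm_def using perm anti tie by auto
qed

lemma assoc_perm_props:
  fixes x :: "real ^ ('n::{finite,linorder})"
  shows "assoc_perm x permutes UNIV \<and> (\<forall>p q. p \<le> q \<longrightarrow> x $ (assoc_perm x q) \<le> x $ (assoc_perm x p))"
proof -
  define f where "f = (\<lambda>i. Key (- x $ i) (idx i))"
  have inj: "inj f"
  proof (rule injI)
    fix i j assume "f i = f j"
    then have "idx i = idx j" by (simp add: f_def)
    then show "i = j" by (simp add: idx_eq)
  qed
  obtain \<sigma> where s: "\<sigma> permutes UNIV" "\<forall>p q. p < q \<longrightarrow> f (\<sigma> p) < f (\<sigma> q)"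
    using iso_exists[OF inj] by blast
  have P: "is_assoc_perm x \<sigma>" unfolding assoc_char using s unfolding f_def by simp
  have U: "\<tau> = \<sigma>" if "is_assoc_perm x \<tau>" for \<tau>
  proof -
    have t: "\<tau> permutes UNIV" "\<forall>p q. p < q \<longrightarrow> f (\<tau> p) < f (\<tau> q)"
      using that unfolding assoc_char f_def by simp_all
    show ?thesis by (rule iso_unique[OF inj t s])
  qed
  have "is_assoc_perm x (THE \<pi>. is_assoc_perm x \<pi>)"
    by (rule theI[of "is_assoc_perm x" \<sigma>, OF P U])
  then have "is_assoc_perm x (assoc_perm x)" unfolding assoc_perm_def .
  then show ?thesis unfolding is_assoc_perm_def by blast
qed

lemma sorted_char:
  fixes z :: "real ^ ('n::{finite,linorder})" and c :: real
  assumes perm: "\<pi> permutes UNIV" and anti: "\<forall>p q. p \<le> q \<longrightarrow> z $ (\<pi> q) \<le> z $ (\<pi> p)"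
  shows "z $ (\<pi> p) - z $ (\<pi> q) > c \<longleftrightarrow>
    (\<exists>T B. card T = card {..p} \<and> card B = card {q..} \<and> (\<forall>t\<in>T. \<forall>b\<in>B. z $ t - z $ b > c))"
proof
  have inj: "inj \<pi>" using perm permutes_inj by blast
  assume h: "z $ (\<pi> p) - z $ (\<pi> q) > c"
  have c1: "card (\<pi> ` {..p}) = card {..p}" using inj by (simp add: card_image inj_on_subset)
  have c2: "card (\<pi> ` {q..}) = card {q..}" using inj by (simp add: card_image inj_on_subset)
  have "\<forall>t\<in>\<pi> ` {..p}. \<forall>b\<in>\<pi> ` {q..}. z $ t - z $ b > c"
  proof (intro ballI)
    fix t b assume "t \<in> \<pi> ` {..p}" "b \<in> \<pi> ` {q..}"
    then obtain p' q' where "p' \<le> p" "t = \<pi> p'" "q \<le> q'" "b = \<pi> q'" by auto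
    then have "z $ (\<pi> p) \<le> z $ t" "z $ b \<le> z $ (\<pi> q)" using anti by auto
    then show "z $ t - z $ b > c" using h by linarith
  qed
  then show "\<exists>T B. card T = card {..p} \<and> card B = card {q..} \<and> (\<forall>t\<in>T. \<forall>b\<in>B. z $ t - z $ b > c)"
    using c1 c2 by blast
next
  have inji: "inj (inv \<pi>)" using perm permutes_inv permutes_inj by blast
  assume "\<exists>T B. card T = card {..p} \<and> card B = card {q..} \<and> (\<forall>t\<in>T. \<forall>b\<in>B. z $ t - z $ b > c)"
  then obtain T B where T: "card T = card {..p}" and B: "card B = card {q..}"
    and TB: "\<forall>t\<in>T. \<forall>b\<in>B. z $ t - z $ b > c" by blast
  have l1: "card {..<p} < card {..p}" by (rule psubset_card_mono) auto
  have l2: "card {q<..} < card {q..}" by (rule psubset_card_mono) auto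
  have "\<not> inv \<pi> ` T \<subseteq> {..<p}"
  proof
    assume "inv \<pi> ` T \<subseteq> {..<p}"
    then have "card (inv \<pi> ` T) \<le> card {..<p}" by (intro card_mono) auto
    moreover have "card (inv \<pi> ` T) = card T" using inji by (simp add: card_image inj_on_subset)
    ultimately show False using T l1 by simp
  qed
  then obtain t where t: "t \<in> T" "\<not> inv \<pi> t < p" by (auto simp: image_subset_iff)
  have "\<not> inv \<pi> ` B \<subseteq> {q<..}"
  proof
    assume "inv \<pi> ` B \<subseteq> {q<..}"
    then have "card (inv \<pi> ` B) \<le> card {q<..}" by (intro card_mono) auto
    moreover have "card (inv \<pi> ` B) = card B" using inji by (simp add: card_image inj_on_subset)
    ultimately show False using B l2 by simp
  qed
  then obtain b where b: "b \<in> B" "\<not> q < inv \<pi> b" by (auto simp: image_subset_iff)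
  have tt: "\<pi> (inv \<pi> t) = t" "\<pi> (inv \<pi> b) = b" using perm by (simp_all add: permutes_inverses(1))
  have "p \<le> inv \<pi> t" "inv \<pi> b \<le> q" using t(2) b(2) by (simp_all add: not_less)
  then have "z $ (\<pi> (inv \<pi> t)) \<le> z $ (\<pi> p)" "z $ (\<pi> q) \<le> z $ (\<pi> (inv \<pi> b))" using anti[rule_format] by simp_all
  then have "z $ t \<le> z $ (\<pi> p)" "z $ (\<pi> q) \<le> z $ b" unfolding tt by auto
  moreover have "z $ t - z $ b > c" using TB t b by auto
  ultimately show "z $ (\<pi> p) - z $ (\<pi> q) > c" by linarith
qed

theorem proposition2p3:
  fixes a :: "nat \<Rightarrow> real" and m k :: nat
    and \<Omega> :: "(real ^ ('n::{finite,linorder})) set" and x y :: "real ^ ('n::{finite,linorder})"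
  assumes dec: "\<And>i j. 1 \<le> i \<Longrightarrow> i < j \<Longrightarrow> j \<le> m \<Longrightarrow> a j < a i"
    and pos: "\<And>i. 1 \<le> i \<Longrightarrow> i \<le> m \<Longrightarrow> 0 < a i"
    and reg: "\<Omega> \<in> regions a m"
    and k: "1 \<le> k" "k \<le> m"
    and x: "x \<in> \<Omega>" and y: "y \<in> \<Omega>"
  shows "Mk a k x = Mk a k y"
proof -
  have conn: "connected \<Omega>" using reg unfolding regions_def by (rule in_components_connected)
  have sub: "\<Omega> \<subseteq> UNIV - arr_union a m" using reg unfolding regions_def by (rule in_components_subset)
  have ak: "0 < a k" using pos[OF k] .
  have km: "k \<in> {1..m}" using k by auto
  have noz: "z $ i - z $ j \<noteq> a k" if "z \<in> \<Omega>" "i \<noteq> j" for z i j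
  proof
    assume h: "z $ i - z $ j = a k"
    have "z \<in> arr_union a m" unfolding arr_union_def mem_Collect_eq
      using that(2) km h by blast
    then show False using sub that(1) by blast
  qed
  have P: "(x $ i - x $ j > a k) \<longleftrightarrow> (y $ i - y $ j > a k)" for i j
  proof (cases "i = j")
    case True then show ?thesis using ak by simp
  next
    case False
    define g where "g = (\<lambda>z. z $ i - z $ j - a k)"
    have gc: "continuous_on \<Omega> g" unfolding g_def by (intro continuous_intros)
    have cg: "connected (g ` \<Omega>)" using connected_continuous_image[OF gc conn] .
    have gne: "g z \<noteq> 0" if "z \<in> \<Omega>" for z using noz[OF that False] by (simp add: g_def)
    have pe: "0 < g z \<longleftrightarrow> z $ i - z $ j > a k" for z by (simp add: g_def)
    show ?thesis
    proof (rule ccontr)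
      assume ne: "\<not> ?thesis"
      have d: "(0 < g x) \<noteq> (0 < g y)" using ne unfolding pe by simp
      have "\<exists>u\<in>\<Omega>. \<exists>v\<in>\<Omega>. g u < 0 \<and> 0 < g v"
      proof (cases "0 < g x")
        case True
        then have "\<not> 0 < g y" using d by simp
        then have "g y < 0" using gne[OF y] by linarith
        then show ?thesis using True x y by blast
      next
        case F: False
        then have "0 < g y" using d by simp
        have "g x < 0" using F gne[OF x] by linarith
        then show ?thesis using \<open>0 < g y\<close> x y by blast
      qed
      then obtain u v where uv: "u \<in> \<Omega>" "v \<in> \<Omega>" "g u < 0" "0 < g v" by blast
      have ci: "\<forall>u\<in>g ` \<Omega>. \<forall>v\<in>g ` \<Omega>. \<forall>z. u \<le> z \<longrightarrow> z \<le> v \<longrightarrow> z \<in> g ` \<Omega>"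
        using cg connected_iff_interval by blast
      have "0 \<in> g ` \<Omega>"
        using ci[rule_format, OF imageI[OF uv(1)] imageI[OF uv(2)], of 0] uv(3,4) by simp
      then obtain w where "w \<in> \<Omega>" "g w = 0" by auto
      then show False using gne by blast
    qed
  qed
  have entry: "sgn (z $ (assoc_perm z p) - z $ (assoc_perm z q) - a k) =
     (if (\<exists>T B. card T = card {..p} \<and> card B = card {q..} \<and> (\<forall>t\<in>T. \<forall>b\<in>B. z $ t - z $ b > a k))
      then 1 else -1)" if z: "z \<in> \<Omega>" for z p q
  proof -
    define \<pi> where "\<pi> = assoc_perm z"
    have perm: "\<pi> permutes UNIV" and anti: "\<forall>p q. p \<le> q \<longrightarrow> z $ (\<pi> q) \<le> z $ (\<pi> p)"
      using assoc_perm_props[of z] unfolding \<pi>_def by auto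
    have nz: "z $ (\<pi> p) - z $ (\<pi> q) \<noteq> a k"
    proof (cases "p = q")
      case True then show ?thesis using ak by simp
    next
      case False
      then have "\<pi> p \<noteq> \<pi> q" using perm by (metis permutes_inj injD)
      then show ?thesis using noz[OF z] by blast
    qed
    have sc: "(\<exists>T B. card T = card {..p} \<and> card B = card {q..} \<and> (\<forall>t\<in>T. \<forall>b\<in>B. z $ t - z $ b > a k))
       \<longleftrightarrow> z $ (\<pi> p) - z $ (\<pi> q) > a k" using sorted_char[OF perm anti] by blast
    show ?thesis unfolding \<pi>_def[symmetric] sc
    proof (cases "z $ (\<pi> p) - z $ (\<pi> q) > a k")
      case True
      then show "sgn (z $ \<pi> p - z $ \<pi> q - a k) = (if z $ (\<pi> p) - z $ (\<pi> q) > a k then 1 else -1)"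
        by simp
    next
      case False
      then have "z $ (\<pi> p) - z $ (\<pi> q) - a k < 0" using nz by linarith
      then show "sgn (z $ \<pi> p - z $ \<pi> q - a k) = (if z $ (\<pi> p) - z $ (\<pi> q) > a k then 1 else -1)"
        using False by simp
    qed
  qed
  have eq: "(\<exists>T B. card T = card {..p} \<and> card B = card {q..} \<and> (\<forall>t\<in>T. \<forall>b\<in>B. x $ t - x $ b > a k))
     \<longleftrightarrow> (\<exists>T B. card T = card {..p} \<and> card B = card {q..} \<and> (\<forall>t\<in>T. \<forall>b\<in>B. y $ t - y $ b > a k))"
    for p q :: 'n using P by simp
  have E: "sgn (x $ (assoc_perm x p) - x $ (assoc_perm x q) - a k) =
      sgn (y $ (assoc_perm y p) - y $ (assoc_perm y q) - a k)" for p q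
    unfolding entry[OF x] entry[OF y] using eq[of p q] by simp
  show ?thesis unfolding Mk_def Let_def
    by (simp only: vec_eq_iff vec_lambda_beta E) simp
qed

end
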